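(* For every qutrit state $\rho$ (density operator on $\mathbb{C}^3$), $C_{\mathcal{F}}(\rho)=\overline{C}_{\mathcal{R}}(\rho)$.
   Context: Fix the computational basis $\{|i\rangle\}_{i=0}^{d-1}$ of $\mathbb{C}^d$ (here $d=3$) as the incoherent basis; $\mathcal{I}$ denotes the set of density operators diagonal in this basis. Let $|\phi^+\rangle=\frac{1}{\sqrt d}\sum_i|i\rangle$ and $\mathcal{U}_d$ the set of diagonal unitaries. The quantum coherence fraction is $C_{\mathcal{F}}(\rho)=\max_{U\in\mathcal{U}_d}\langle\phi^+|U^\dagger\rho U|\phi^+\rangle$. The robustness of coherence is $C_{\mathcal{R}}(\rho)=\min\{s\ge0: \exists\text{ density operator }\tau,\ (\rho+s\tau)/(1+s)\in\mathcal{I}\}$, and $\overline{C}_{\mathcal{R}}(\rho)=(1+C_{\mathcal{R}}(\rho))/d$. *)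

theory Defs
  imports "HOL-Analysis.Analysis"
begin

text \<open>Operators on C^d are d x d complex matrices indexed by a finite type 'n
  (d = CARD('n)); the computational basis is the standard basis of the index type.\<close>

definition hermitian_op :: "complex^'n^'n \<Rightarrow> bool" where
  "hermitian_op A \<longleftrightarrow> (\<forall>i j. A$i$j = cnj (A$j$i))"

definition quad_form :: "complex^'n^'n \<Rightarrow> complex^'n \<Rightarrow> complex" where
  "quad_form A v = (\<Sum>i\<in>UNIV. \<Sum>j\<in>UNIV. cnj (v$i) * A$i$j * v$j)"

definition trace_op :: "complex^'n^'n \<Rightarrow> complex" where
  "trace_op A = (\<Sum>i\<in>UNIV. A$i$i)"

definition density_op :: "complex^'n^'n \<Rightarrow> bool" where
  "density_op A \<longleftrightarrow> hermitian_op A \<and> (\<forall>v. 0 \<le> Re (quad_form A v)) \<and> trace_op A = 1"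

definition incoherent :: "complex^'n^'n \<Rightarrow> bool" where
  "incoherent A \<longleftrightarrow> density_op A \<and> (\<forall>i j. i \<noteq> j \<longrightarrow> A$i$j = 0)"

text \<open>Diagonal unitaries U = diag(u) with |u_i| = 1; phi+ = (1/sqrt d) sum_i |i>.
  Then <phi+| U^dagger rho U |phi+> = (1/d) sum_{i,j} cnj(u_i) rho_ij u_j.\<close>
definition max_coh_vec :: "'n::finite itself \<Rightarrow> complex^'n" where
  "max_coh_vec _ = (\<chi> i. complex_of_real (1 / sqrt (real CARD('n))))"

definition diag_op :: "complex^'n \<Rightarrow> complex^'n^'n" where
  "diag_op u = (\<chi> i j. if i = j then u$i else 0)"

definition adjoint_op :: "complex^'n^'n \<Rightarrow> complex^'n^'n" where
  "adjoint_op A = (\<chi> i j. cnj (A$j$i))"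

definition coherence_fraction :: "complex^'n::finite^'n \<Rightarrow> real" where
  "coherence_fraction \<rho> =
     Sup {Re (quad_form (adjoint_op (diag_op u) ** \<rho> ** diag_op u) (max_coh_vec TYPE('n)))
          | u :: complex^'n. \<forall>i. cmod (u$i) = 1}"

definition robustness :: "complex^'n^'n \<Rightarrow> real" where
  "robustness \<rho> = Inf {s::real. 0 \<le> s \<and>
     (\<exists>\<tau>. density_op \<tau> \<and> incoherent ((1 / (1 + s)) *\<^sub>R (\<rho> + s *\<^sub>R \<tau>)))}"

definition robustness_bar :: "complex^'n::finite^'n \<Rightarrow> real" where
  "robustness_bar \<rho> = (1 + robustness \<rho>) / real CARD('n)"

end

theory Submission
  imports Defs
begin

lemma L1: fixes \<alpha> \<beta> :: real assumes "\<And>h. \<beta> * h \<le> \<alpha> * h^2" shows "\<beta> = 0"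
proof (rule ccontr)
  assume "\<beta> \<noteq> 0"
  define h where "h = \<beta> / (2*(\<bar>\<alpha>\<bar>+1))"
  have k: "\<bar>\<alpha>\<bar>+1 > 0" by simp
  have "\<beta> * h = \<beta>^2 / (2*(\<bar>\<alpha>\<bar>+1))" by (simp add: h_def power2_eq_square)
  moreover have "\<alpha> * h^2 = \<alpha> * \<beta>^2 / (4*(\<bar>\<alpha>\<bar>+1)^2)" by (simp add: h_def power_divide power_mult_distrib power2_eq_square algebra_simps)
  moreover have "\<alpha> * \<beta>^2 / (4*(\<bar>\<alpha>\<bar>+1)^2) < \<beta>^2 / (2*(\<bar>\<alpha>\<bar>+1))"
  proof -
    have b: "\<beta>^2 > 0" using \<open>\<beta> \<noteq> 0\<close> by simp
    have "\<alpha> * \<beta>^2 * (2*(\<bar>\<alpha>\<bar>+1)) < \<beta>^2 * (4*(\<bar>\<alpha>\<bar>+1)^2)"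
    proof -
      have s1: "\<alpha> < 2*(\<bar>\<alpha>\<bar>+1)" by (auto simp: abs_if)
      have "\<alpha> * (2*(\<bar>\<alpha>\<bar>+1)) < (2*(\<bar>\<alpha>\<bar>+1)) * (2*(\<bar>\<alpha>\<bar>+1))" using s1 k by (intro mult_strict_right_mono) auto
      then have "\<alpha> * (2*(\<bar>\<alpha>\<bar>+1)) < 4*(\<bar>\<alpha>\<bar>+1)^2" by (simp add: power2_eq_square algebra_simps)
      then show ?thesis using b by (metis mult.assoc mult.commute mult_less_cancel_left_pos)
    qed
    then show ?thesis using k by (simp add: field_simps)
  qed
  ultimately show False using assms[of h] by linarith
qed

lemma cis_rat: fixes h :: real shows "cmod (Complex ((1-h^2)/(1+h^2)) (2*h/(1+h^2))) = 1"
proof -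
  have p: "1 + h^2 > 0" by (simp add: add_pos_nonneg)
  have e: "(1-h^2)^2 + (2*h)^2 = (1+h^2)^2" by algebra
  have "((1-h^2)/(1+h^2))^2 + (2*h/(1+h^2))^2 = ((1-h^2)^2 + (2*h)^2)/(1+h^2)^2"
    by (simp add: power_divide add_divide_distrib)
  also have "\<dots> = 1" using e p by simp
  finally show ?thesis by (simp add: cmod_def)
qed

definition Qf :: "real \<Rightarrow> real \<Rightarrow> real \<Rightarrow> real \<Rightarrow> real \<Rightarrow> real \<Rightarrow> real \<Rightarrow> real \<Rightarrow> real" where
  "Qf P R C t x1 x2 y1 y2 = P * (x1^2+x2^2) + R * (y1^2+y2^2) - 2 * (C * (x1 * y1+x2 * y2) - t * (x1 * y2-x2 * y1))"

lemma L2: fixes a0 b c :: real assumes "\<And>q. q \<noteq> 0 \<Longrightarrow> a0 + b * q + c * q^2 \<ge> 0" shows "a0 \<ge> 0"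
proof (rule ccontr)
  assume "\<not> a0 \<ge> 0" then have a: "a0 < 0" by simp
  define q where "q = min 1 (-a0/(2 * (\<bar>b\<bar>+\<bar>c\<bar>+1)))"
  have k: "\<bar>b\<bar>+\<bar>c\<bar>+1 > 0" by simp
  have q0: "q > 0" using a k by (simp add: q_def divide_neg_pos)
  have q1: "q \<le> 1" by (simp add: q_def)
  have q2: "q \<le> -a0/(2 * (\<bar>b\<bar>+\<bar>c\<bar>+1))" by (simp add: q_def)
  have "q^2 \<le> q" using q0 q1 by (simp add: power2_eq_square mult_left_le)
  have "\<bar>b * q\<bar> \<le> \<bar>b\<bar> * q" using q0 by (simp add: abs_mult)
  moreover have "\<bar>c * q^2\<bar> \<le> \<bar>c\<bar> * q" using \<open>q^2 \<le> q\<close> by (simp add: abs_mult mult_left_mono)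
  moreover have "\<bar>b\<bar> * q + \<bar>c\<bar> * q + q \<le> -a0/2" using q2 k by (simp add: field_simps)
  moreover have "b * q \<le> \<bar>b * q\<bar>" "c * q^2 \<le> \<bar>c * q^2\<bar>" by simp_all
  ultimately have "b * q + c * q^2 < -a0" using q0 a by linarith
  with assms[of q] q0 show False by simp
qed

lemma core_real:
  fixes P R C t :: real
  assumes tor: "\<And>x1 x2 y1 y2. (1+x1)^2+x2^2 = 1 \<Longrightarrow> (1+y1)^2+y2^2 = 1 \<Longrightarrow> Qf P R C t x1 x2 y1 y2 \<ge> 0"
  shows "Qf P R C t x1 x2 y1 y2 \<ge> 0" "P \<ge> 0" "R \<ge> 0" "P + R - 2 * C \<ge> 0"
    "P + R + (P+R-2 * C) = 0 \<Longrightarrow> C = 0 \<and> t = 0 \<and> P = 0 \<and> R = 0"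
proof -
  show P: "P \<ge> 0" using tor[of "-2" 0 0 0] by (simp add: Qf_def)
  show R: "R \<ge> 0" using tor[of 0 0 "-2" 0] by (simp add: Qf_def)
  show PR: "P + R - 2 * C \<ge> 0" using tor[of "-2" 0 "-2" 0] by (simp add: Qf_def)
  have Qnz: "P + R * (p^2+q^2) - 2 * (C * p - t * q) \<ge> 0" if q: "q \<noteq> 0" for p q
  proof -
    define s where "s = p - p^2 - q^2"
    define NN where "NN = q^2 + s^2"
    have NN: "NN > 0" using q by (simp add: NN_def add_pos_nonneg)
    define xa where "xa = -2 * q^2/NN"
    define xb where "xb = -2 * q * s/NN"
    define ya where "ya = p * xa - q * xb"
    define yb where "yb = p * xb + q * xa"
    have t1: "(1+xa)^2+xb^2 = 1"
    proof -
      have "(NN - 2 * q^2)^2 + (2 * q * s)^2 = NN^2" by (simp add: NN_def power2_eq_square algebra_simps)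
      then show ?thesis using NN by (simp add: xa_def xb_def field_simps)
    qed
    have t2: "(1+ya)^2+yb^2 = 1"
    proof -
      have e1: "xa^2+xb^2 = -2 * xa" using t1 by (simp add: power2_eq_square algebra_simps)
      have e2: "ya^2+yb^2 = (p^2+q^2) * (xa^2+xb^2)" by (simp add: ya_def yb_def power2_eq_square algebra_simps)
      have e3: "xa * s = q * xb" using NN by (simp add: xa_def xb_def power2_eq_square)
      have "2 * ya + (ya^2+yb^2) = 2 * (xa * s - q * xb)" unfolding e2 e1 by (simp add: ya_def s_def algebra_simps power2_eq_square)
      then have "2 * ya + (ya^2+yb^2) = 0" using e3 by simp
      then show ?thesis by (simp add: power2_eq_square algebra_simps)
    qed
    have xa: "xa \<noteq> 0" using q NN by (simp add: xa_def)
    have n: "xa^2 + xb^2 > 0" using xa by (simp add: add_pos_nonneg)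
    have "Qf P R C t xa xb ya yb = (xa^2+xb^2) * (P + R * (p^2+q^2) - 2 * (C * p - t * q))"
      by (simp add: Qf_def ya_def yb_def power2_eq_square algebra_simps)
    then show ?thesis using tor[OF t1 t2] n by (simp add: zero_le_mult_iff)
  qed
  have Q1: "P + R * (p^2+q^2) - 2 * (C * p - t * q) \<ge> 0" for p q
  proof -
    have "P + R * p^2 - 2 * C * p + (2 * t) * q' + R * q'^2 \<ge> 0" if "q' \<noteq> 0" for q'
      using Qnz[OF that, of p] by (simp add: algebra_simps)
    then have "P + R * p^2 - 2 * C * p \<ge> 0" by (rule L2)
    then show ?thesis using Qnz[of q p] by (cases "q = 0") (auto simp: algebra_simps)
  qed
  show "Qf P R C t x1 x2 y1 y2 \<ge> 0"
  proof (cases "x1^2+x2^2 = 0")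
    case True
    then have "x1 = 0" "x2 = 0" by (simp_all add: sum_power2_eq_zero_iff)
    then show ?thesis using R by (simp add: Qf_def)
  next
    case False
    define nn where "nn = x1^2+x2^2"
    have nn: "nn > 0" using False by (simp add: nn_def add_pos_nonneg order_less_le)
    define uu where "uu = x1 * y1+x2 * y2"
    define vv where "vv = x1 * y2-x2 * y1"
    have lag: "uu^2+vv^2 = nn * (y1^2+y2^2)" by (simp add: uu_def vv_def nn_def power2_eq_square algebra_simps)
    have "nn * (P + R * ((uu/nn)^2+(vv/nn)^2) - 2 * (C * (uu/nn) - t * (vv/nn))) = Qf P R C t x1 x2 y1 y2"
    proof -
      have "nn * (P + R * ((uu/nn)^2+(vv/nn)^2) - 2 * (C * (uu/nn) - t * (vv/nn))) = nn * P + R * ((uu^2+vv^2)/nn) - 2 * (C * uu - t * vv)"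
        using nn by (simp add: field_simps power2_eq_square)
      also have "\<dots> = nn * P + R * (y1^2+y2^2) - 2 * (C * uu - t * vv)" using lag nn by simp
      also have "\<dots> = Qf P R C t x1 x2 y1 y2" by (simp add: Qf_def uu_def vv_def nn_def)
      finally show ?thesis .
    qed
    then show ?thesis using Q1[of "uu/nn" "vv/nn"] nn by (metis zero_le_mult_iff order_less_le)
  qed
  show "P + R + (P+R-2 * C) = 0 \<Longrightarrow> C = 0 \<and> t = 0 \<and> P = 0 \<and> R = 0"
  proof -
    assume z: "P + R + (P+R-2 * C) = 0"
    then have "P = 0" "R = 0" using P R PR by linarith+
    moreover have "C * C + t * t \<le> 0" using Q1[of C "-t"] \<open>P=0\<close> \<open>R=0\<close> by (simp add: power2_eq_square)
    moreover have "C * C \<ge> 0" "t * t \<ge> 0" by simp_all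
    ultimately have "C * C = 0" "t * t = 0" "P = 0" "R = 0" by linarith+
    then show ?thesis by simp
  qed
qed

definition zeta :: "real \<Rightarrow> complex" where
  "zeta h = Complex ((1-h^2)/(1+h^2)) (2 * h/(1+h^2))"

lemma Ls: fixes s :: complex assumes "\<And>h. Re (s * zeta h) \<le> Re s" shows "Im s = 0"
proof -
  have "(- Im s) * h \<le> Re s * h^2" for h
  proof -
    have p: "1 + h^2 > 0" by (simp add: add_pos_nonneg)
    then have pn: "1 + h^2 \<noteq> 0" by simp
    have zr: "Re (zeta h) = (1-h^2)/(1+h^2)" "Im (zeta h) = 2 * h/(1+h^2)" by (simp_all add: zeta_def)
    have xm: "Re (zeta h) * (1+h^2) = 1-h^2" using pn by (simp add: zr)
    have ym: "Im (zeta h) * (1+h^2) = 2 * h" using pn by (simp add: zr)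
    have "Re (s * zeta h) * (1+h^2) = Re s * (Re (zeta h) * (1+h^2)) - Im s * (Im (zeta h) * (1+h^2))" by (simp add: algebra_simps)
    also have "\<dots> = Re s * (1-h^2) - Im s * (2 * h)" by (simp only: xm ym)
    finally have e: "Re (s * zeta h) * (1+h^2) = Re s * (1-h^2) - Im s * (2 * h)" .
    have "Re (s * zeta h) * (1+h^2) \<le> Re s * (1+h^2)" using assms[of h] p by (intro mult_right_mono) auto
    then have "Re s * (1-h^2) - Im s * (2 * h) \<le> Re s * (1+h^2)" using e by simp
    then show ?thesis by (simp add: algebra_simps)
  qed
  then have "- Im s = 0" by (rule L1)
  then show ?thesis by simp
qed

lemma exp1: "Re (Complex A t * Complex (1+x1) x2 + Complex B (-t) * Complex (1+y1) y2 + cnj (Complex (1+x1) x2) * Complex Cc t * Complex (1+y1) y2) = A + B + Cc + ((A+Cc) * x1 + (B+Cc) * y1 + Cc * (x1 * y1+x2 * y2) - t * (x1 * y2-x2 * y1))"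
  by (simp add: algebra_simps)
lemma exp2: fixes A B Cc t p1 q1 p2 q2 p3 q3 :: real shows "Re (Complex A t + Complex B (-t)) * (cmod (Complex p1 q1))^2 + Re (Complex A t + Complex Cc t) * (cmod (Complex p2 q2))^2 + Re (Complex B (-t) + Complex Cc t) * (cmod (Complex p3 q3))^2
          - 2 * Re (cnj (Complex p1 q1) * Complex A t * Complex p2 q2 + cnj (Complex p1 q1) * Complex B (-t) * Complex p3 q3 + cnj (Complex p2 q2) * Complex Cc t * Complex p3 q3)
   = Qf (A + Cc) (B + Cc) Cc t (p2 - p1) (q2 - q1) (p3 - p1) (q3 - q1)"
  unfolding cmod_power2 by (simp add: Qf_def power2_eq_square algebra_simps)

lemma core_cplx:
  fixes a b c :: complex
  assumes H: "\<And>w2 w3. cmod w2 = 1 \<Longrightarrow> cmod w3 = 1 \<Longrightarrow> Re (a * w2 + b * w3 + cnj w2 * c * w3) \<le> Re (a + b + c)"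
  shows "Im c = Im a" "Im b = - Im a"
    "0 \<le> Re (a+b) * (cmod v1)^2 + Re (a+c) * (cmod v2)^2 + Re (b+c) * (cmod v3)^2
          - 2 * Re (cnj v1 * a * v2 + cnj v1 * b * v3 + cnj v2 * c * v3)"
    "Re (a+b+c) = 0 \<Longrightarrow> a = 0 \<and> b = 0 \<and> c = 0"
proof -
  have z1: "cmod (zeta h) = 1" for h using cis_rat[of h] by (simp add: zeta_def)
  have "Im (a + cnj c) = 0"
  proof (rule Ls)
    fix h
    have "Re (a * zeta h + b * 1 + cnj (zeta h) * c * 1) \<le> Re (a + b + c)" using H[of "zeta h" 1] z1 by simp
    then show "Re ((a + cnj c) * zeta h) \<le> Re (a + cnj c)" by (simp add: algebra_simps)
  qed
  then show ic: "Im c = Im a" by simp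
  have "Im (b + c) = 0"
  proof (rule Ls)
    fix h
    have "Re (a * 1 + b * zeta h + cnj 1 * c * zeta h) \<le> Re (a + b + c)" using H[of 1 "zeta h"] z1 by simp
    then show "Re ((b + c) * zeta h) \<le> Re (b + c)" by (simp add: algebra_simps)
  qed
  then show ib: "Im b = - Im a" using ic by simp
  define A where "A = Re a"
  define B where "B = Re b"
  define Cc where "Cc = Re c"
  define t where "t = Im a"
  have ar: "a = Complex A t" "b = Complex B (-t)" "c = Complex Cc t" using ic ib by (simp_all add: A_def B_def Cc_def t_def complex_eq_iff)
  have tor: "Qf (A+Cc) (B+Cc) Cc t x1 x2 y1 y2 \<ge> 0" if h1: "(1+x1)^2+x2^2 = 1" and h2: "(1+y1)^2+y2^2 = 1" for x1 x2 y1 y2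
  proof -
    have m1: "cmod (Complex (1+x1) x2) = 1" using h1 by (simp add: cmod_def)
    have m2: "cmod (Complex (1+y1) y2) = 1" using h2 by (simp add: cmod_def)
    have "Re (a * Complex (1+x1) x2 + b * Complex (1+y1) y2 + cnj (Complex (1+x1) x2) * c * Complex (1+y1) y2) \<le> Re (a + b + c)"
      using H[OF m1 m2] .
    then have ineq: "(A+Cc) * x1 + (B+Cc) * y1 + Cc * (x1 * y1 + x2 * y2) - t * (x1 * y2 - x2 * y1) \<le> 0"
      unfolding ar exp1 by simp
    have e: "x1^2+x2^2 = -2 * x1" "y1^2+y2^2 = -2 * y1" using h1 h2 by (simp_all add: power2_eq_square algebra_simps)
    have "Qf (A+Cc) (B+Cc) Cc t x1 x2 y1 y2 = (A+Cc) * (x1^2+x2^2) + (B+Cc) * (y1^2+y2^2) - 2 * (Cc * (x1 * y1 + x2 * y2) - t * (x1 * y2 - x2 * y1))" by (simp add: Qf_def)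
    also have "\<dots> = (A+Cc) * (-2 * x1) + (B+Cc) * (-2 * y1) - 2 * (Cc * (x1 * y1 + x2 * y2) - t * (x1 * y2 - x2 * y1))" by (simp only: e)
    also have "\<dots> = -2 * ((A+Cc) * x1 + (B+Cc) * y1 + Cc * (x1 * y1 + x2 * y2) - t * (x1 * y2 - x2 * y1))" by (simp add: algebra_simps)
    finally show ?thesis using ineq by (simp add: mult_nonpos_nonpos)
  qed
  note cr = core_real[OF tor]
  have vr: "v1 = Complex (Re v1) (Im v1)" "v2 = Complex (Re v2) (Im v2)" "v3 = Complex (Re v3) (Im v3)" by simp_all
  have "Re (a+b) * (cmod v1)^2 + Re (a+c) * (cmod v2)^2 + Re (b+c) * (cmod v3)^2
          - 2 * Re (cnj v1 * a * v2 + cnj v1 * b * v3 + cnj v2 * c * v3)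
       = Qf (A+Cc) (B+Cc) Cc t (Re v2 - Re v1) (Im v2 - Im v1) (Re v3 - Re v1) (Im v3 - Im v1)"
    unfolding ar using exp2[of A t B "Re v1" "Im v1" Cc "Re v2" "Im v2" "Re v3" "Im v3"] by (simp only: complex.collapse)
  then show "0 \<le> Re (a+b) * (cmod v1)^2 + Re (a+c) * (cmod v2)^2 + Re (b+c) * (cmod v3)^2
          - 2 * Re (cnj v1 * a * v2 + cnj v1 * b * v3 + cnj v2 * c * v3)" using cr(1)[of "Re v2 - Re v1" "Im v2 - Im v1" "Re v3 - Re v1" "Im v3 - Im v1"] by linarith
  show "Re (a+b+c) = 0 \<Longrightarrow> a = 0 \<and> b = 0 \<and> c = 0"
  proof -
    assume "Re (a+b+c) = 0"
    then have "(A+Cc) + (B+Cc) + ((A+Cc) + (B+Cc) - 2 * Cc) = 0" by (simp add: A_def B_def Cc_def)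
    then have "Cc = 0 \<and> t = 0 \<and> A+Cc = 0 \<and> B+Cc = 0" using cr(5) by blast
    then show ?thesis unfolding ar by (simp add: complex_eq_iff)
  qed
qed

lemma herm_facts:
  fixes M :: "complex^3^3"
  assumes "hermitian_op M"
  shows "M$2$1 = cnj (M$1$2)" "M$3$1 = cnj (M$1$3)" "M$3$2 = cnj (M$2$3)"
    "Im (M$1$1) = 0" "Im (M$2$2) = 0" "Im (M$3$3) = 0"
proof -
  have h: "\<And>i j. M$i$j = cnj (M$j$i)" using assms unfolding hermitian_op_def by blast
  show "M$2$1 = cnj (M$1$2)" "M$3$1 = cnj (M$1$3)" "M$3$2 = cnj (M$2$3)" by (rule h)+
  show "Im (M$1$1) = 0" using arg_cong[OF h[of 1 1], of Im] by simp
  show "Im (M$2$2) = 0" using arg_cong[OF h[of 2 2], of Im] by simp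
  show "Im (M$3$3) = 0" using arg_cong[OF h[of 3 3], of Im] by simp
qed

lemma re_cc: "Re (cnj y * cnj m * x) = Re (cnj x * m * y)"
proof -
  have e: "cnj y * cnj m * x = cnj (cnj x * m * y)" by simp
  show ?thesis by (subst e) (simp only: cnj.sel)
qed

lemma re_diag: "Im m = 0 \<Longrightarrow> Re (cnj v * m * v) = Re m * (cmod v)^2"
  unfolding cmod_power2 by (simp add: algebra_simps power2_eq_square)

lemma arith9: "(x1::real) + y1 + y2 + y1 + x2 + y3 + y2 + y3 + x3 = x1 + x2 + x3 + 2 * (y1+y2+y3)" by simp

lemma quad3:
  fixes M :: "complex^3^3"
  assumes "hermitian_op M"
  shows "Re (quad_form M v) = Re (M$1$1) * (cmod (v$1))^2 + Re (M$2$2) * (cmod (v$2))^2 + Re (M$3$3) * (cmod (v$3))^2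
     + 2 * Re (cnj (v$1) * M$1$2 * v$2 + cnj (v$1) * M$1$3 * v$3 + cnj (v$2) * M$2$3 * v$3)"
proof -
  note hf = herm_facts[OF assms]
  have "Re (quad_form M v) = Re (cnj (v$1) * M$1$1 * v$1) + Re (cnj (v$1) * M$1$2 * v$2) + Re (cnj (v$1) * M$1$3 * v$3)
     + Re (cnj (v$2) * M$2$1 * v$1) + Re (cnj (v$2) * M$2$2 * v$2) + Re (cnj (v$2) * M$2$3 * v$3)
     + Re (cnj (v$3) * M$3$1 * v$1) + Re (cnj (v$3) * M$3$2 * v$2) + Re (cnj (v$3) * M$3$3 * v$3)"
    unfolding quad_form_def sum_3 plus_complex.sel by linarith
  also have "\<dots> = Re (M$1$1) * (cmod (v$1))^2 + Re (M$2$2) * (cmod (v$2))^2 + Re (M$3$3) * (cmod (v$3))^2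
     + 2 * (Re (cnj (v$1) * M$1$2 * v$2) + Re (cnj (v$1) * M$1$3 * v$3) + Re (cnj (v$2) * M$2$3 * v$3))"
    unfolding hf(1-3) re_cc re_diag[OF hf(4)] re_diag[OF hf(5)] re_diag[OF hf(6)] by (rule arith9)
  finally show ?thesis by (simp only: plus_complex.sel)
qed

lemma sum_if_mult: fixes f g :: "'n::finite \<Rightarrow> complex" shows "(\<Sum>k\<in>UNIV. (if i = k then g k else 0) * f k) = (g i::complex) * f i"
proof -
  have "(\<Sum>k\<in>UNIV. (if i = k then g k else 0) * f k) = (\<Sum>k\<in>UNIV. if i = k then g i * f i else 0)"
    by (rule sum.cong) auto
  then show ?thesis by (simp add: sum.delta)
qed

lemma sum_mult_if: fixes f g :: "'n::finite \<Rightarrow> complex" shows "(\<Sum>k\<in>UNIV. f k * (if k = j then g k else 0)) = f j * (g j::complex)"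
proof -
  have "(\<Sum>k\<in>UNIV. f k * (if k = j then g k else 0)) = (\<Sum>k\<in>UNIV. if k = j then f j * g j else 0)"
    by (rule sum.cong) auto
  then show ?thesis by (simp add: sum.delta')
qed

lemma adj_diag: "adjoint_op (diag_op u) = diag_op (\<chi> i. cnj (u$i))"
  by (simp add: vec_eq_iff adjoint_op_def diag_op_def)

lemma diag_right: "(X ** diag_op u)$i$j = X$i$j * (u$j :: complex)"
  unfolding matrix_matrix_mult_def diag_op_def by (simp add: sum_mult_if)

lemma diag_left: "(diag_op u ** X)$i$j = (u$i :: complex) * X$i$j"
  unfolding matrix_matrix_mult_def diag_op_def by (simp add: sum_if_mult)

lemma entry_conj:
  fixes \<rho> :: "complex^'n::finite^'n"
  shows "(adjoint_op (diag_op u) ** \<rho> ** diag_op u) $ i $ j = cnj (u$i) * \<rho>$i$j * u$j"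
  unfolding diag_right adj_diag diag_left by simp

lemma value_eq:
  fixes \<rho> :: "complex^3^3"
  shows "Re (quad_form (adjoint_op (diag_op u) ** \<rho> ** diag_op u) (max_coh_vec TYPE(3))) = Re (quad_form \<rho> u) / 3"
proof -
  define c where "c = complex_of_real (1 / sqrt 3)"
  have r: "(1 / sqrt 3) * (1 / sqrt 3) = (1/3::real)" by (simp add: power2_eq_square[symmetric] power_divide)
  have cc: "cnj c * c = 1/3" unfolding c_def complex_cnj_complex_of_real of_real_mult[symmetric] r by simp
  have "quad_form (adjoint_op (diag_op u) ** \<rho> ** diag_op u) (max_coh_vec TYPE(3))
      = (\<Sum>i\<in>UNIV. \<Sum>j\<in>UNIV. (cnj c * c) * (cnj (u$i) * \<rho>$i$j * u$j))"
    unfolding quad_form_def entry_conj max_coh_vec_def c_def by (simp add: algebra_simps)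
  also have "\<dots> = (cnj c * c) * quad_form \<rho> u" unfolding quad_form_def by (simp add: sum_distrib_left)
  also have "\<dots> = (1/3) * quad_form \<rho> u" by (simp only: cc)
  also have "\<dots> = quad_form \<rho> u / 3" by simp
  finally have e: "quad_form (adjoint_op (diag_op u) ** \<rho> ** diag_op u) (max_coh_vec TYPE(3)) = quad_form \<rho> u / 3" .
  show ?thesis unfolding e by (simp add: Re_divide_numeral)
qed

lemma quad_add: "quad_form (A + B) v = quad_form A v + quad_form B v"
  unfolding quad_form_def by (simp add: distrib_left distrib_right sum.distrib)

lemma quad_scale: "quad_form (r *\<^sub>R A) v = of_real r * quad_form A v"
  unfolding quad_form_def vector_scaleR_component unfolding scaleR_conv_of_real by (simp add: sum_distrib_left ac_simps)

lemma trace_add: "trace_op (A + B) = trace_op A + trace_op B"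
  unfolding trace_op_def by (simp add: sum.distrib)

lemma trace_scale: "trace_op (r *\<^sub>R A) = of_real r * trace_op A"
  unfolding trace_op_def vector_scaleR_component unfolding scaleR_conv_of_real by (simp add: sum_distrib_left)

lemma herm_add: assumes "hermitian_op A" "hermitian_op B" shows "hermitian_op (A + B)"
  unfolding hermitian_op_def
proof (intro allI)
  fix i j
  have "A$i$j = cnj (A$j$i)" "B$i$j = cnj (B$j$i)" using assms unfolding hermitian_op_def by blast+
  then show "(A + B)$i$j = cnj ((A + B)$j$i)" by simp
qed

lemma herm_scale: assumes "hermitian_op A" shows "hermitian_op (r *\<^sub>R A)"
  unfolding hermitian_op_def
proof (intro allI)
  fix i j
  have "A$i$j = cnj (A$j$i)" using assms unfolding hermitian_op_def by blast
  then show "(r *\<^sub>R A)$i$j = cnj ((r *\<^sub>R A)$j$i)" unfolding vector_scaleR_component by (simp add: scaleR_conv_of_real)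
qed

lemma unit_cnj: "cmod z = 1 \<Longrightarrow> cnj z * z = 1"
  by (metis complex_norm_square mult.commute of_real_1 power_one)

lemma quad_diag:
  fixes N :: "complex^'n::finite^'n"
  assumes off: "\<And>i j. i \<noteq> j \<Longrightarrow> N$i$j = 0" and un: "\<And>i. cmod (u$i) = 1"
  shows "quad_form N u = trace_op N"
proof -
  have "(\<Sum>j\<in>UNIV. cnj (u$i) * N$i$j * u$j) = N$i$i" for i
  proof -
    have "(\<Sum>j\<in>UNIV. cnj (u$i) * N$i$j * u$j) = (\<Sum>j\<in>UNIV. if j = i then cnj (u$i) * N$i$i * u$i else 0)"
      by (rule sum.cong) (auto simp: off)
    also have "\<dots> = cnj (u$i) * N$i$i * u$i" by (simp add: sum.delta')
    also have "\<dots> = N$i$i" using unit_cnj[OF un[of i]] by (simp add: ac_simps)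
    finally show ?thesis .
  qed
  then show ?thesis unfolding quad_form_def trace_op_def by simp
qed

lemma torus_compact: "compact {u::complex^3. \<forall>i. cmod (u$i) = 1}"
unfolding compact_eq_bounded_closed proof (intro conjI)
  show "bounded {u::complex^3. \<forall>i. cmod (u$i) = 1}"
    unfolding bounded_iff
  proof (intro exI ballI)
    fix x :: "complex^3" assume "x \<in> {u. \<forall>i. cmod (u$i) = 1}"
    then have "\<forall>i. norm (x$i) = 1" by simp
    have "norm x \<le> (\<Sum>i\<in>UNIV. norm (x$i))" unfolding norm_vec_def by (rule L2_set_le_sum) simp
    then show "norm x \<le> 3" using \<open>\<forall>i. norm (x$i) = 1\<close> by (simp add: sum_3)
  qed
  show "closed {u::complex^3. \<forall>i. cmod (u$i) = 1}"
    by (intro closed_Collect_all closed_Collect_eq continuous_intros)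
qed

lemma quad_cont: "continuous_on S (\<lambda>u. Re (quad_form (\<rho>::complex^'n::finite^'n) u))"
  unfolding quad_form_def by (intro continuous_intros)

theorem theorem3:
  fixes \<rho> :: "complex^3^3"
  assumes "density_op \<rho>"
  shows "coherence_fraction \<rho> = robustness_bar \<rho>"
proof -
  have herm: "hermitian_op \<rho>" and psd: "\<And>v. 0 \<le> Re (quad_form \<rho> v)" and tr: "trace_op \<rho> = 1"
    using assms unfolding density_op_def by blast+
  note hf = herm_facts[OF herm]
  define K where "K = {u::complex^3. \<forall>i. cmod (u$i) = 1}"
  have cK: "compact K" unfolding K_def by (rule torus_compact)
  have neK: "K \<noteq> {}"
  proof -
    have "(\<chi> i. (1::complex)) \<in> K" by (simp add: K_def)
    then show ?thesis by blast
  qed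
  have coK: "continuous_on K (\<lambda>u. Re (quad_form \<rho> u))" by (rule quad_cont)
  obtain u0 where u0K: "u0 \<in> K" and umax0: "\<forall>y\<in>K. Re (quad_form \<rho> y) \<le> Re (quad_form \<rho> u0)"
    using continuous_attains_sup[OF cK neK coK] by (elim bexE) 
  have umax: "\<And>u. u \<in> K \<Longrightarrow> Re (quad_form \<rho> u) \<le> Re (quad_form \<rho> u0)" using umax0 by blast
  define m where "m = Re (quad_form \<rho> u0)"
  have un: "\<And>i. cmod (u0$i) = 1" using u0K by (simp add: K_def)
  have uc: "\<And>i. u0$i * cnj (u0$i) = 1" using unit_cnj[OF un] by (simp add: mult.commute)
  have trr: "Re (\<rho>$1$1) + Re (\<rho>$2$2) + Re (\<rho>$3$3) = 1"
    using arg_cong[OF tr, of Re] unfolding trace_op_def sum_3 by simp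
  have qK: "Re (quad_form \<rho> u) = 1 + 2 * Re (cnj (u$1) * \<rho>$1$2 * u$2 + cnj (u$1) * \<rho>$1$3 * u$3 + cnj (u$2) * \<rho>$2$3 * u$3)"
    if "u \<in> K" for u
  proof -
    have "\<And>i. cmod (u$i) = 1" using that by (simp add: K_def)
    then show ?thesis unfolding quad3[OF herm] using trr by simp
  qed
  define a where "a = cnj (u0$1) * \<rho>$1$2 * u0$2"
  define b where "b = cnj (u0$1) * \<rho>$1$3 * u0$3"
  define c where "c = cnj (u0$2) * \<rho>$2$3 * u0$3"
  have m_eq: "m = 1 + 2 * Re (a + b + c)" unfolding m_def a_def b_def c_def using qK[OF u0K] by simp
  have H: "Re (a * w2 + b * w3 + cnj w2 * c * w3) \<le> Re (a + b + c)" if w2: "cmod w2 = 1" and w3: "cmod w3 = 1" for w2 w3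
  proof -
    define u where "u = (\<chi> i. u0$i * (if i = 2 then w2 else if i = 3 then w3 else 1))"
    have u1: "u$1 = u0$1" "u$2 = u0$2 * w2" "u$3 = u0$3 * w3" by (simp_all add: u_def)
    have uK: "u \<in> K" unfolding K_def
    proof (intro CollectI allI)
      fix i :: 3
      show "cmod (u$i) = 1" using exhaust_3[of i] un w2 w3 by (auto simp: u1 norm_mult)
    qed
    have "Re (quad_form \<rho> u) \<le> m" using umax[OF uK] by (simp add: m_def)
    then have "Re (cnj (u$1) * \<rho>$1$2 * u$2 + cnj (u$1) * \<rho>$1$3 * u$3 + cnj (u$2) * \<rho>$2$3 * u$3) \<le> Re (a + b + c)"
      using qK[OF uK] m_eq by simp
    moreover have "cnj (u$1) * \<rho>$1$2 * u$2 + cnj (u$1) * \<rho>$1$3 * u$3 + cnj (u$2) * \<rho>$2$3 * u$3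
       = a * w2 + b * w3 + cnj w2 * c * w3"
      unfolding u1 a_def b_def c_def by (simp add: ac_simps)
    ultimately show ?thesis by simp
  qed
  note cc = core_cplx[OF H]
  define dd :: "3 \<Rightarrow> real" where "dd i = (if i = 1 then Re (a+b) else if i = 2 then Re (a+c) else Re (b+c))" for i
  define T :: "complex^3^3" where "T = (\<chi> i j. if i = j then complex_of_real (dd i) else - \<rho>$i$j)"
  have Te: "T$1$1 = of_real (Re (a+b))" "T$2$2 = of_real (Re (a+c))" "T$3$3 = of_real (Re (b+c))"
    "T$1$2 = - \<rho>$1$2" "T$1$3 = - \<rho>$1$3" "T$2$3 = - \<rho>$2$3"
    by (simp_all add: T_def dd_def)
  have Toff: "\<And>i j. i \<noteq> j \<Longrightarrow> T$i$j = - \<rho>$i$j" by (simp add: T_def)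
  have hT: "hermitian_op T" unfolding hermitian_op_def
  proof (intro allI)
    fix i j :: 3
    show "T$i$j = cnj (T$j$i)"
    proof (cases "i = j")
      case True then show ?thesis by (simp add: T_def)
    next
      case False
      have "\<rho>$i$j = cnj (\<rho>$j$i)" using herm unfolding hermitian_op_def by blast
      then show ?thesis using False by (simp add: T_def)
    qed
  qed
  have psdT: "0 \<le> Re (quad_form T v)" for v
  proof -
    define v' :: "complex^3" where "v' = (\<chi> i. cnj (u0$i) * v$i)"
    have nv: "cmod (v'$i) = cmod (v$i)" for i using un by (simp add: v'_def norm_mult)
    have e1: "cnj (v'$1) * a * v'$2 = (u0$1 * cnj (u0$1)) * (u0$2 * cnj (u0$2)) * (cnj (v$1) * \<rho>$1$2 * v$2)"
      by (simp add: v'_def a_def ac_simps)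
    have e2: "cnj (v'$1) * b * v'$3 = (u0$1 * cnj (u0$1)) * (u0$3 * cnj (u0$3)) * (cnj (v$1) * \<rho>$1$3 * v$3)"
      by (simp add: v'_def b_def ac_simps)
    have e3: "cnj (v'$2) * c * v'$3 = (u0$2 * cnj (u0$2)) * (u0$3 * cnj (u0$3)) * (cnj (v$2) * \<rho>$2$3 * v$3)"
      by (simp add: v'_def c_def ac_simps)
    have "Re (quad_form T v) = Re (a+b) * (cmod (v$1))^2 + Re (a+c) * (cmod (v$2))^2 + Re (b+c) * (cmod (v$3))^2
       - 2 * Re (cnj (v$1) * \<rho>$1$2 * v$2 + cnj (v$1) * \<rho>$1$3 * v$3 + cnj (v$2) * \<rho>$2$3 * v$3)"
      unfolding quad3[OF hT] Te by simp
    also have "\<dots> = Re (a+b) * (cmod (v'$1))^2 + Re (a+c) * (cmod (v'$2))^2 + Re (b+c) * (cmod (v'$3))^2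
       - 2 * Re (cnj (v'$1) * a * v'$2 + cnj (v'$1) * b * v'$3 + cnj (v'$2) * c * v'$3)"
      unfolding nv e1 e2 e3 uc by simp
    also have "\<dots> \<ge> 0" by (rule cc(3))
    finally show ?thesis .
  qed
  have trT: "trace_op T = of_real (m - 1)" unfolding trace_op_def sum_3 Te m_eq by (simp add: complex_eq_iff)
  have dpos1: "Re (a+b) \<ge> 0"
  proof -
    have "0 \<le> Re (a+b) * (cmod (1::complex))^2 + Re (a+c) * (cmod (0::complex))^2 + Re (b+c) * (cmod (0::complex))^2
          - 2 * Re (cnj 1 * a * 0 + cnj 1 * b * 0 + cnj 0 * c * 0)" by (rule cc(3))
    then show ?thesis by simp
  qed
  have dpos2: "Re (a+c) \<ge> 0"
  proof -
    have "0 \<le> Re (a+b) * (cmod (0::complex))^2 + Re (a+c) * (cmod (1::complex))^2 + Re (b+c) * (cmod (0::complex))^2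
          - 2 * Re (cnj 0 * a * 1 + cnj 0 * b * 0 + cnj 1 * c * 0)" by (rule cc(3))
    then show ?thesis by simp
  qed
  have dpos3: "Re (b+c) \<ge> 0"
  proof -
    have "0 \<le> Re (a+b) * (cmod (0::complex))^2 + Re (a+c) * (cmod (0::complex))^2 + Re (b+c) * (cmod (1::complex))^2
          - 2 * Re (cnj 0 * a * 0 + cnj 0 * b * 1 + cnj 0 * c * 1)" by (rule cc(3))
    then show ?thesis by simp
  qed
  note dpos = dpos1 dpos2 dpos3
  have m1: "m \<ge> 1" using dpos m_eq by simp
  define S where "S = {s::real. 0 \<le> s \<and> (\<exists>\<tau>. density_op \<tau> \<and> incoherent ((1 / (1 + s)) *\<^sub>R (\<rho> + s *\<^sub>R \<tau>)))}"
  have lower: "m - 1 \<le> s" if "s \<in> S" for s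
  proof -
    from that obtain \<tau> where s0: "0 \<le> s" and d\<tau>: "density_op \<tau>" and inc: "incoherent ((1 / (1 + s)) *\<^sub>R (\<rho> + s *\<^sub>R \<tau>))"
      unfolding S_def by blast
    have off: "(\<rho> + s *\<^sub>R \<tau>)$i$j = 0" if "i \<noteq> j" for i j
    proof -
      have "((1 / (1 + s)) *\<^sub>R (\<rho> + s *\<^sub>R \<tau>))$i$j = 0" using inc that unfolding incoherent_def by blast
      then show ?thesis using s0 by simp
    qed
    have "quad_form (\<rho> + s *\<^sub>R \<tau>) u0 = trace_op (\<rho> + s *\<^sub>R \<tau>)" by (rule quad_diag[OF off un]) 
    then have "quad_form \<rho> u0 + of_real s * quad_form \<tau> u0 = 1 + of_real s * trace_op \<tau>"
      unfolding quad_add quad_scale trace_add trace_scale tr by simp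
    moreover have "trace_op \<tau> = 1" using d\<tau> unfolding density_op_def by blast
    ultimately have e: "quad_form \<rho> u0 + of_real s * quad_form \<tau> u0 = 1 + of_real s" by simp
    have "Re (quad_form \<rho> u0 + of_real s * quad_form \<tau> u0) = Re (1 + of_real s)" using e by (rule arg_cong)
    then have e2: "m + s * Re (quad_form \<tau> u0) = 1 + s" unfolding m_def by simp
    have "Re (quad_form \<tau> u0) \<ge> 0" using d\<tau> unfolding density_op_def by blast
    then have "s * Re (quad_form \<tau> u0) \<ge> 0" by (rule mult_nonneg_nonneg[OF s0])
    then show ?thesis using e2 by linarith
  qed
  have member: "m - 1 \<in> S"
  proof (cases "m = 1")
    case False
    then have mg: "m - 1 > 0" using m1 by simp
    define \<tau> where "\<tau> = (1 / (m - 1)) *\<^sub>R T"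
    have d\<tau>: "density_op \<tau>" unfolding density_op_def
    proof (intro conjI allI)
      show "hermitian_op \<tau>" unfolding \<tau>_def by (rule herm_scale[OF hT])
      fix v show "0 \<le> Re (quad_form \<tau> v)" unfolding \<tau>_def quad_scale using psdT[of v] mg by simp
    next
      show "trace_op \<tau> = 1" unfolding \<tau>_def trace_scale trT using mg by (simp add: of_real_mult[symmetric] del: of_real_mult)
    qed
    have eqT: "(m - 1) *\<^sub>R \<tau> = T" unfolding \<tau>_def using mg by simp
    have inc: "incoherent ((1 / (1 + (m - 1))) *\<^sub>R (\<rho> + (m - 1) *\<^sub>R \<tau>))"
      unfolding eqT incoherent_def density_op_def
    proof (intro conjI allI impI)
      show "hermitian_op ((1 / (1 + (m - 1))) *\<^sub>R (\<rho> + T))" by (intro herm_scale herm_add herm hT)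
      fix v show "0 \<le> Re (quad_form ((1 / (1 + (m - 1))) *\<^sub>R (\<rho> + T)) v)"
        unfolding quad_scale quad_add using psd[of v] psdT[of v] m1 by simp
    next
      show "trace_op ((1 / (1 + (m - 1))) *\<^sub>R (\<rho> + T)) = 1"
        unfolding trace_scale trace_add tr trT using m1 by (simp add: complex_eq_iff)
    next
      fix i j :: 3 assume "i \<noteq> j"
      then show "((1 / (1 + (m - 1))) *\<^sub>R (\<rho> + T))$i$j = 0" by (simp add: Toff)
    qed
    show ?thesis unfolding S_def using mg d\<tau> inc by auto
  next
    case True
    then have "Re (a + b + c) = 0" using m_eq by simp
    then have abc: "a = 0" "b = 0" "c = 0" using cc(4) by blast+
    have nz: "u0$i \<noteq> 0" "cnj (u0$i) \<noteq> 0" for i using un[of i] by auto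
    have z: "\<rho>$1$2 = 0" "\<rho>$1$3 = 0" "\<rho>$2$3 = 0" using abc nz unfolding a_def b_def c_def by auto
    have inc: "incoherent \<rho>" unfolding incoherent_def
    proof (intro conjI allI impI)
      show "density_op \<rho>" by (rule assms)
      fix i j :: 3 assume "i \<noteq> j"
      then show "\<rho>$i$j = 0" using exhaust_3[of i] exhaust_3[of j] z hf(1-3) by auto
    qed
    have "(1 / (1 + 0)) *\<^sub>R (\<rho> + (0::real) *\<^sub>R \<rho>) = \<rho>" by simp
    then show ?thesis unfolding S_def using True inc assms by auto
  qed
  have rob: "robustness \<rho> = m - 1"
    unfolding robustness_def S_def[symmetric] by (rule cInf_eq_minimum[OF member lower])
  have coh: "coherence_fraction \<rho> = m / 3"
    unfolding coherence_fraction_def value_eq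
  proof (rule cSup_eq_maximum)
    show "m / 3 \<in> {Re (quad_form \<rho> u) / 3 |u. \<forall>i. cmod (u $ i) = 1}" using un unfolding m_def by blast
    fix x assume "x \<in> {Re (quad_form \<rho> u) / 3 |u. \<forall>i. cmod (u $ i) = 1}"
    then obtain u where "x = Re (quad_form \<rho> u) / 3" "\<forall>i. cmod (u $ i) = 1" by blast
    then show "x \<le> m / 3" using umax[of u] unfolding K_def m_def by simp
  qed
  show ?thesis unfolding coh robustness_bar_def rob by simp
qed

end
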